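(* Let $N\geq3$, let $m$ be a positive integer, and let $(M,g)$ be the $N$-dimensional Riemannian model with pole $o$ and metric $ds^2=dr^2+\psi^2(r)\,d\omega^2$ with $\psi(r)=r\,e^{r^{2m}}$. Then for all $u\in C_c^\infty(M\setminus\{o\})$, $$\int_M\Big(\frac{\partial u}{\partial r}\Big)^2dv_g\geq\frac{(N-2)^2}{4}\int_M\frac{u^2}{r^2}dv_g+m^2(N-1)^2\int_M r^{4m-2}u^2dv_g+m(N-1)(N-2+2m)\int_M r^{2m-2}u^2dv_g,$$ and the constant $\frac{(N-2)^2}{4}$ is sharp, i.e. the inequality fails for some such $u$ if $\frac{(N-2)^2}{4}$ is replaced by any larger constant.
   Context: $d\omega^2$ is the standard metric on $\mathbb{S}^{N-1}$, $r$ the geodesic distance from $o$, $\frac{\partial u}{\partial r}$ the radial derivative, $dv_g$ the Riemannian volume. *)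

theory Defs
  imports "HOL-Analysis.Analysis"
begin

text \<open>The model manifold with pole o is realised in global polar coordinates as
  R^N, o = 0, x = r*omega with r = norm x, omega in S^(N-1).  Away from o this
  chart is a diffeomorphism, so C_c^infinity(M minus o) = smooth functions on
  R^N minus 0 with compact support not containing 0.\<close>

coinductive smooth_on :: "'a::euclidean_space set \<Rightarrow> ('a \<Rightarrow> real) \<Rightarrow> bool" for S where
  "f differentiable_on S \<Longrightarrow> (\<forall>v. smooth_on S (\<lambda>x. frechet_derivative f (at x) v))
     \<Longrightarrow> smooth_on S f"

definition test_fn :: "('a::euclidean_space \<Rightarrow> real) \<Rightarrow> bool" where
  "test_fn u \<longleftrightarrow> smooth_on (- {0}) u \<and> compact (closure {x. u x \<noteq> 0})
      \<and> 0 \<notin> closure {x. u x \<noteq> 0}"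

definition psi :: "nat \<Rightarrow> real \<Rightarrow> real" where
  "psi m r = r * exp (r ^ (2 * m))"

text \<open>Riemannian volume dv_g = psi(r)^(N-1) dr d omega = (psi(r)/r)^(N-1) dx.\<close>
definition vol_density :: "nat \<Rightarrow> 'a::euclidean_space \<Rightarrow> real" where
  "vol_density m x = (psi m (norm x) / norm x) ^ (DIM('a) - 1)"

definition model_integral :: "nat \<Rightarrow> ('a::euclidean_space \<Rightarrow> real) \<Rightarrow> real" where
  "model_integral m f = (\<integral>x. f x * vol_density m x \<partial>lborel)"

definition radial_deriv :: "('a::euclidean_space \<Rightarrow> real) \<Rightarrow> 'a \<Rightarrow> real" where
  "radial_deriv u x = frechet_derivative u (at x) (x /\<^sub>R norm x)"

definition hardy_rhs :: "nat \<Rightarrow> real \<Rightarrow> ('a::euclidean_space \<Rightarrow> real) \<Rightarrow> real" where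
  "hardy_rhs m c u =
     c * model_integral m (\<lambda>x. (u x)\<^sup>2 / (norm x)\<^sup>2)
     + (real m)\<^sup>2 * (real DIM('a) - 1)\<^sup>2 * model_integral m (\<lambda>x. norm x ^ (4*m - 2) * (u x)\<^sup>2)
     + real m * (real DIM('a) - 1) * (real DIM('a) - 2 + 2 * real m)
         * model_integral m (\<lambda>x. norm x ^ (2*m - 2) * (u x)\<^sup>2)"

end

theory Submission
  imports Defs "HOL-Real_Asymp.Real_Asymp"
begin

lemma smooth_on_gen:
  assumes S: "open S" and P0: "P f"
    and step: "\<And>g. P g \<Longrightarrow> g differentiable_on S \<and>
        (\<forall>v. \<exists>g'. P g' \<and> (\<forall>x\<in>S. frechet_derivative g (at x) v = g' x))"
  shows "smooth_on S f"
proof -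
  define X where "X = (\<lambda>f. \<exists>g. P g \<and> (\<forall>x\<in>S. f x = g x))"
  have "X f" using P0 unfolding X_def by blast
  then show ?thesis
  proof (coinduction arbitrary: f rule: smooth_on.coinduct)
    case (smooth_on f)
    then obtain g where Pg: "P g" and eq: "\<forall>x\<in>S. f x = g x" unfolding X_def by blast
    have gd: "g differentiable_on S" and gv: "\<forall>v. \<exists>g'. P g' \<and> (\<forall>x\<in>S. frechet_derivative g (at x) v = g' x)"
      using step[OF Pg] by auto
    have hd: "(f has_derivative frechet_derivative g (at x)) (at x)" if "x \<in> S" for x
    proof -
      have "g differentiable at x" using gd S that differentiable_on_eq_differentiable_at by blast
      then have "(g has_derivative frechet_derivative g (at x)) (at x)" using frechet_derivative_works by blast
      then show ?thesis by (rule has_derivative_transform_within_open[OF _ S that]) (use eq in auto)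
    qed
    have "f differentiable_on S"
      using hd S by (meson differentiableI differentiable_at_imp_differentiable_on)
    moreover have "\<forall>v. X (\<lambda>x. frechet_derivative f (at x) v)"
    proof
      fix v
      obtain g' where "P g'" and g': "\<forall>x\<in>S. frechet_derivative g (at x) v = g' x" using gv by blast
      moreover have "\<forall>x\<in>S. frechet_derivative f (at x) v = g' x"
        using hd g' frechet_derivative_at by metis
      ultimately show "X (\<lambda>x. frechet_derivative f (at x) v)" unfolding X_def by blast
    qed
    ultimately show ?case by blast
  qed
qed

definition En :: "nat \<Rightarrow> real \<Rightarrow> real" where
  "En n t = (if t > 0 then exp (-1/t) / t^n else 0)"

lemma En_lim0: "((\<lambda>h. En n h / h) \<longlongrightarrow> 0) (at (0::real))"
proof (rule filterlim_split_at)
  show "((\<lambda>h. En n h / h) \<longlongrightarrow> 0) (at_left 0)"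
    by (rule tendsto_eventually) (auto simp: En_def eventually_at_left_field intro!: exI[of _ "-1"])
  have lim: "((\<lambda>s::real. s ^ (Suc n) / exp s) \<longlongrightarrow> 0) at_top" by (rule tendsto_power_div_exp_0)
  have "((\<lambda>h. (1/h) ^ (Suc n) / exp (1/h)) \<longlongrightarrow> 0) (at_right (0::real))"
    using filterlim_compose[OF lim filterlim_inverse_at_top_right]
    by (simp add: inverse_eq_divide)
  then show "((\<lambda>h. En n h / h) \<longlongrightarrow> 0) (at_right 0)"
  proof (rule Lim_transform_eventually)
    show "\<forall>\<^sub>F h in at_right 0. (1/h) ^ (Suc n) / exp (1/h) = En n h / h"
      unfolding eventually_at_right_field
      by (rule exI[of _ 1]) (auto simp: En_def exp_minus field_simps power_divide)
  qed
qed

lemma En_deriv: "((En n) has_real_derivative (En (n+2) t - real n * En (n+1) t)) (at t)"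
proof -
  consider "t > 0" | "t < 0" | "t = 0" by linarith
  then show ?thesis
  proof cases
    case 1
    have d: "((\<lambda>t. exp (-1/t) / t^n) has_real_derivative
        (exp (-1/t) * (1/t^2) * t^n - exp(-1/t) * (real n * t^(n-1))) / (t^n)^2) (at t)"
      using 1 by (auto intro!: derivative_eq_intros simp: power2_eq_square)
    have e: "(exp (-1/t) * (1/t^2) * t^n - exp(-1/t) * (real n * t^(n-1))) / (t^n)^2
        = En (n+2) t - real n * En (n+1) t"
    proof (cases n)
      case 0 then show ?thesis using 1 by (simp add: En_def power2_eq_square)
    next
      case (Suc k)
      then show ?thesis using 1 by (simp add: En_def field_simps power2_eq_square)
    qed
    show ?thesis
      apply (rule has_field_derivative_transform_within_open[where S="{0<..}"])
      using d e 1 by (auto simp: En_def)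
  next
    case 2
    have "((\<lambda>_. 0::real) has_real_derivative 0) (at t)" by simp
    then have "(En n has_real_derivative 0) (at t)"
      apply (rule has_field_derivative_transform_within_open[where S="{..<0}"])
      using 2 by (auto simp: En_def)
    then show ?thesis using 2 by (simp add: En_def)
  next
    case 3
    have "((En n) has_real_derivative 0) (at 0)"
      unfolding has_field_derivative_iff using En_lim0[of n] by (simp add: En_def)
    then show ?thesis using 3 by (simp add: En_def)
  qed
qed

lemma En_cont: "continuous_on A (En n)"
  using En_deriv DERIV_isCont continuous_at_imp_continuous_on by blast

inductive alg :: "('a::euclidean_space \<Rightarrow> real) \<Rightarrow> bool" where
  alg_const: "alg (\<lambda>x. c)"
| alg_pw: "alg (\<lambda>x. norm x powr p)"
| alg_ex: "alg (\<lambda>x. En n (\<alpha> + \<beta> * ln (norm x)))"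
| alg_lin: "alg (\<lambda>x. inner x w)"
| alg_add: "alg f \<Longrightarrow> alg g \<Longrightarrow> alg (\<lambda>x. f x + g x)"
| alg_mul: "alg f \<Longrightarrow> alg g \<Longrightarrow> alg (\<lambda>x. f x * g x)"

lemma norm_powr_deriv:
  fixes x :: "'a::euclidean_space"
  assumes "x \<noteq> 0"
  shows "((\<lambda>x. norm x powr p) has_derivative (\<lambda>h. p * (norm x powr (p-2) * inner x h))) (at x)"
proof -
  have n: "(norm has_derivative (\<lambda>h. h \<bullet> sgn x)) (at x)" using has_derivative_norm[OF assms] .
  have pp: "((\<lambda>r. r powr p) has_real_derivative p * norm x powr (p - 1)) (at (norm x))"
    using assms by (intro has_real_derivative_powr) auto
  have c: "((\<lambda>x. norm x powr p) has_derivative (\<lambda>h. (p * norm x powr (p - 1)) * (h \<bullet> sgn x))) (at x)"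
    using has_derivative_compose[OF n pp[unfolded has_field_derivative_def]] by simp
  have e: "(p * norm x powr (p - 1)) * (h \<bullet> sgn x) = p * (norm x powr (p-2) * inner x h)" for h
  proof -
    have "norm x powr (p - 1) = norm x powr ((p - 2) + 1)" by simp
    also have "\<dots> = norm x powr (p - 2) * norm x" using powr_add[of "norm x" "p-2" 1] by simp
    finally have "norm x powr (p - 1) = norm x powr (p - 2) * norm x" .
    then show ?thesis using assms by (simp add: sgn_div_norm inner_commute field_simps)
  qed
  show ?thesis using c by (simp add: e)
qed

lemma ln_norm_deriv:
  fixes x :: "'a::euclidean_space"
  assumes "x \<noteq> 0"
  shows "((\<lambda>x. ln (norm x)) has_derivative (\<lambda>h. norm x powr (-2) * inner x h)) (at x)"
proof -
  have n: "(norm has_derivative (\<lambda>h. h \<bullet> sgn x)) (at x)" using has_derivative_norm[OF assms] .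
  have pp: "(ln has_real_derivative inverse (norm x)) (at (norm x))"
    using assms by (intro DERIV_ln) auto
  have c: "((\<lambda>x. ln (norm x)) has_derivative (\<lambda>h. inverse (norm x) * (h \<bullet> sgn x))) (at x)"
    using has_derivative_compose[OF n pp[unfolded has_field_derivative_def]] by simp
  have e: "inverse (norm x) * (h \<bullet> sgn x) = norm x powr (-2) * inner x h" for h
    using assms by (simp add: sgn_div_norm inner_commute field_simps powr_minus power2_eq_square)
  show ?thesis using c by (simp add: e)
qed

lemma alg_deriv:
  "alg f \<Longrightarrow> \<exists>Df. (\<forall>x. x \<noteq> 0 \<longrightarrow> (f has_derivative Df x) (at x)) \<and> (\<forall>v. alg (\<lambda>x. Df x v))"
proof (induction rule: alg.induct)
  case (alg_const c)
  show ?case by (rule exI[of _ "\<lambda>x v. 0"]) (auto intro: alg.intros)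
next
  case (alg_pw p)
  show ?case
    apply (rule exI[of _ "\<lambda>x v. p * (norm x powr (p-2) * inner x v)"])
    apply (auto intro!: norm_powr_deriv alg.intros)
    done
next
  case (alg_ex n \<alpha> \<beta>)
  show ?case
  proof (rule exI[of _ "\<lambda>x v. (En (n+2) (\<alpha> + \<beta> * ln (norm x)) + (- real n) * En (n+1) (\<alpha> + \<beta> * ln (norm x)))
                               * (\<beta> * (norm x powr (-2) * inner x v))"], intro conjI allI impI)
    fix x :: 'a assume x: "x \<noteq> 0"
    have l: "((\<lambda>x. \<alpha> + \<beta> * ln (norm x)) has_derivative (\<lambda>h. \<beta> * (norm x powr (-2) * inner x h))) (at x)"
      using has_derivative_add[OF has_derivative_const[of \<alpha>] has_derivative_mult_right[OF ln_norm_deriv[OF x], of \<beta>]] by simp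
    have e: "((En n) has_derivative (\<lambda>y. (En (n+2) (\<alpha> + \<beta> * ln (norm x)) + (- real n) * En (n+1) (\<alpha> + \<beta> * ln (norm x))) * y)) (at (\<alpha> + \<beta> * ln (norm x)))"
      using En_deriv[of n "\<alpha> + \<beta> * ln (norm x)"] unfolding has_field_derivative_def by simp
    show "((\<lambda>x. En n (\<alpha> + \<beta> * ln (norm x))) has_derivative (\<lambda>v. (En (n+2) (\<alpha> + \<beta> * ln (norm x)) + (- real n) * En (n+1) (\<alpha> + \<beta> * ln (norm x)))
                               * (\<beta> * (norm x powr (-2) * inner x v)))) (at x)"
      using has_derivative_compose[OF l e] by simp
  next
    fix v :: 'a
    show "alg (\<lambda>x. (En (n+2) (\<alpha> + \<beta> * ln (norm x)) + (- real n) * En (n+1) (\<alpha> + \<beta> * ln (norm x)))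
                               * (\<beta> * (norm x powr (-2) * inner x v)))"
      by (intro alg.intros)
  qed
next
  case (alg_lin w)
  show ?case
    apply (rule exI[of _ "\<lambda>x v. inner v w"])
    apply (auto intro!: derivative_eq_intros alg.intros)
    done
next
  case (alg_add f g)
  then obtain Df Dg where f: "\<forall>x. x \<noteq> 0 \<longrightarrow> (f has_derivative Df x) (at x)" "\<forall>v. alg (\<lambda>x. Df x v)"
    and g: "\<forall>x. x \<noteq> 0 \<longrightarrow> (g has_derivative Dg x) (at x)" "\<forall>v. alg (\<lambda>x. Dg x v)" by blast
  show ?case
    apply (rule exI[of _ "\<lambda>x v. Df x v + Dg x v"])
    using f g by (auto intro!: derivative_eq_intros alg.intros)
next
  case (alg_mul f g)
  then obtain Df Dg where f: "\<forall>x. x \<noteq> 0 \<longrightarrow> (f has_derivative Df x) (at x)" "\<forall>v. alg (\<lambda>x. Df x v)"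
    and g: "\<forall>x. x \<noteq> 0 \<longrightarrow> (g has_derivative Dg x) (at x)" "\<forall>v. alg (\<lambda>x. Dg x v)" by blast
  show ?case
    apply (rule exI[of _ "\<lambda>x v. f x * Dg x v + Df x v * g x"])
    using f g alg_mul.hyps by (auto intro!: derivative_eq_intros alg.intros)
qed

lemma alg_smooth: "alg f \<Longrightarrow> smooth_on (-{0}) f"
proof (rule smooth_on_gen[where P=alg])
  fix g :: "'a \<Rightarrow> real" assume "alg g"
  then obtain Dg where d: "\<forall>x. x \<noteq> 0 \<longrightarrow> (g has_derivative Dg x) (at x)" and a: "\<forall>v. alg (\<lambda>x. Dg x v)"
    using alg_deriv by blast
  have "g differentiable_on (-{0})"
    unfolding differentiable_on_def using d
    by (metis ComplD differentiableI differentiable_at_withinI singletonI)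
  moreover have "\<forall>x\<in>-{0}. frechet_derivative g (at x) v = Dg x v" for v
    using d frechet_derivative_at by fastforce
  ultimately show "g differentiable_on - {0} \<and> (\<forall>v. \<exists>g'. alg g' \<and> (\<forall>x\<in>- {0}. frechet_derivative g (at x) v = g' x))"
    using a by blast
qed auto

lemma glue_cont:
  fixes f :: "'a::euclidean_space \<Rightarrow> real"
  assumes "0 < r0" "continuous_on (-{0}) f" "\<And>x. norm x < r0 \<Longrightarrow> f x = 0"
  shows "continuous_on UNIV f"
proof -
  have "UNIV = ball 0 r0 \<union> (-{0::'a})" using assms(1) by auto
  moreover have "continuous_on (ball 0 r0) f"
    using continuous_on_cong[of "ball 0 r0" "ball 0 r0" f "\<lambda>_. 0"] assms(3) by auto
  ultimately show ?thesis using continuous_on_open_Un[of "ball 0 r0" "-{0}" f] assms(2)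
    by (metis open_ball open_Compl closed_singleton)
qed

lemma integrable_cs:
  fixes f :: "'a::euclidean_space \<Rightarrow> real"
  assumes "continuous_on UNIV f" "\<And>x. norm x > R \<Longrightarrow> f x = 0"
  shows "integrable lborel f"
proof -
  have "integrable lborel (\<lambda>x. indicator (cball 0 R) x *\<^sub>R f x)"
    by (rule borel_integrable_compact) (auto intro: continuous_on_subset[OF assms(1)])
  moreover have "(\<lambda>x. indicator (cball 0 R) x *\<^sub>R f x) = f"
    using assms(2) by (auto simp: indicator_def fun_eq_iff not_le)
  ultimately show ?thesis by simp
qed

lemma hk_lborel:
  fixes f :: "'a::euclidean_space \<Rightarrow> real"
  assumes "continuous_on UNIV f" "\<And>x. norm x > R \<Longrightarrow> f x = 0"
  shows "integral UNIV f = (\<integral>x. f x \<partial>lborel)"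
  using integral_lborel[OF integrable_cs[OF assms]] .

lemma box_out:
  fixes x :: "'a::euclidean_space"
  assumes "x \<notin> cbox (-(R *\<^sub>R One)) (R *\<^sub>R One)"
  shows "norm x > R"
proof -
  from assms obtain b where b: "b \<in> Basis" "\<not> (-R \<le> x \<bullet> b \<and> x \<bullet> b \<le> R)"
    by (auto simp: mem_box inner_minus_left)
  then have "\<bar>x \<bullet> b\<bar> > R" by auto
  moreover have "\<bar>x \<bullet> b\<bar> \<le> norm x" using Basis_le_norm[OF b(1)] .
  ultimately show ?thesis by linarith
qed

lemma integral_UNIV_box:
  fixes g :: "'a::euclidean_space \<Rightarrow> real"
  assumes "continuous_on UNIV g" "\<And>x. norm x > R \<Longrightarrow> g x = 0"
  shows "(g has_integral (integral (cbox (-(R *\<^sub>R One)) (R *\<^sub>R One)) g)) UNIV"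
proof -
  let ?B = "cbox (-(R *\<^sub>R One)) (R *\<^sub>R One) :: 'a set"
  have "g integrable_on ?B" by (rule integrable_continuous) (auto intro: continuous_on_subset[OF assms(1)])
  then have "(g has_integral (integral ?B g)) ?B" by (simp add: integrable_integral)
  then show ?thesis
    by (rule has_integral_on_superset) (auto intro: assms(2) box_out)
qed

lemma scale_UNIV:
  fixes g :: "'a::euclidean_space \<Rightarrow> real"
  assumes "continuous_on UNIV g" "\<And>x. norm x > R \<Longrightarrow> g x = 0" "c > 0"
  shows "integral UNIV (\<lambda>x. g (c *\<^sub>R x)) = integral UNIV g / c ^ DIM('a)"
proof -
  let ?a = "-(R *\<^sub>R One) :: 'a" and ?b = "R *\<^sub>R One :: 'a"
  let ?I = "integral (cbox ?a ?b) g"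
  have g: "(g has_integral ?I) UNIV" by (rule integral_UNIV_box[OF assms(1,2)])
  have "g integrable_on cbox ?a ?b" by (rule integrable_continuous) (auto intro: continuous_on_subset[OF assms(1)])
  then have "(g has_integral ?I) (cbox ?a ?b)" by (simp add: integrable_integral)
  from has_integral_affinity'[OF this assms(3), of 0]
  have "((\<lambda>x. g (c *\<^sub>R x)) has_integral ?I /\<^sub>R c ^ DIM('a)) (cbox (?a /\<^sub>R c) (?b /\<^sub>R c))" by simp
  then have "((\<lambda>x. g (c *\<^sub>R x)) has_integral ?I /\<^sub>R c ^ DIM('a)) UNIV"
  proof (rule has_integral_on_superset)
    fix x :: 'a assume x: "x \<notin> cbox (?a /\<^sub>R c) (?b /\<^sub>R c)"
    have "c *\<^sub>R x \<notin> cbox ?a ?b"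
    proof
      assume "c *\<^sub>R x \<in> cbox ?a ?b"
      then have "x \<in> cbox (?a /\<^sub>R c) (?b /\<^sub>R c)"
        using assms(3) by (auto simp: mem_box inner_minus_left field_simps)
      with x show False by simp
    qed
    then show "g (c *\<^sub>R x) = 0" using box_out assms(2) by blast
  qed auto
  then show ?thesis using g by (simp add: integral_unique divide_inverse_commute)
qed

lemma dilation_identity:
  fixes F :: "'a::euclidean_space \<Rightarrow> real" and DF :: "'a \<Rightarrow> 'a \<Rightarrow> real"
  assumes D: "\<And>x. (F has_derivative DF x) (at x)"
    and C: "continuous_on UNIV (\<lambda>x. DF x x)"
    and R: "R > 0" "\<And>x. norm x > R \<Longrightarrow> F x = 0" "\<And>x. norm x > R \<Longrightarrow> DF x x = 0"
  shows "integral UNIV (\<lambda>x. DF x x) = - real DIM('a) * integral UNIV F"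
proof -
  let ?B = "cbox (-((2*R) *\<^sub>R One)) ((2*R) *\<^sub>R One) :: 'a set"
  let ?U = "{1/2..2::real}"
  let ?N = "DIM('a)"
  define I where "I = integral UNIV F"
  have Fc: "continuous_on UNIV F"
    using D by (meson continuous_at_imp_continuous_on has_derivative_continuous)
  have lin: "linear (DF x)" for x using D has_derivative_linear by blast
  have fx: "((\<lambda>t. F (t *\<^sub>R x)) has_field_derivative DF (t *\<^sub>R x) x) (at t within ?U)" for t x
  proof -
    have l: "((\<lambda>t. t *\<^sub>R x) has_derivative (\<lambda>s. s *\<^sub>R x)) (at t)"
      by (auto intro!: derivative_eq_intros)
    have "((\<lambda>t. F (t *\<^sub>R x)) has_derivative (\<lambda>s. DF (t *\<^sub>R x) (s *\<^sub>R x))) (at t)"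
      using has_derivative_compose[OF l D] .
    moreover have "(\<lambda>s. DF (t *\<^sub>R x) (s *\<^sub>R x)) = (*) (DF (t *\<^sub>R x) x)"
      using linear_cmul[OF lin] by (auto simp: fun_eq_iff)
    ultimately show ?thesis unfolding has_field_derivative_def
      using has_derivative_at_withinI by fastforce
  qed
  have Fs: "continuous_on UNIV (\<lambda>x. F (t *\<^sub>R x))" for t
    by (intro continuous_on_compose2[OF Fc]) (auto intro!: continuous_intros)
  have int: "(\<lambda>x. F (t *\<^sub>R x)) integrable_on ?B" for t
    by (rule integrable_continuous) (auto intro: continuous_on_subset[OF Fs])
  have cont: "continuous_on (?U \<times> ?B) (\<lambda>(t, x). DF (t *\<^sub>R x) x)"
  proof -
    have "continuous_on (?U \<times> ?B) (\<lambda>p. DF (fst p *\<^sub>R snd p) (fst p *\<^sub>R snd p) / fst p)"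
    proof -
      have c1: "continuous_on (?U \<times> ?B) (\<lambda>p. fst p *\<^sub>R snd p)"
        by (intro continuous_intros)
      have c2: "continuous_on (?U \<times> ?B) (\<lambda>p. DF (fst p *\<^sub>R snd p) (fst p *\<^sub>R snd p))"
        by (rule continuous_on_compose2[OF C c1]) simp
      show ?thesis
        by (rule continuous_on_divide[OF c2 continuous_on_fst[OF continuous_on_id]]) auto
    qed
    moreover have "DF (fst p *\<^sub>R snd p) (fst p *\<^sub>R snd p) / fst p = (\<lambda>(t, x). DF (t *\<^sub>R x) x) p"
      if "p \<in> ?U \<times> ?B" for p
    proof -
      obtain t x where p: "p = (t, x)" by force
      have "DF (t *\<^sub>R x) (t *\<^sub>R x) = t * DF (t *\<^sub>R x) x"
        using linear_cmul[OF lin, of "t *\<^sub>R x" t x] by simp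
      moreover have "t \<noteq> 0" using that p by auto
      ultimately show ?thesis using p by simp
    qed
    ultimately show ?thesis by (rule continuous_on_eq)
  qed
  have L: "((\<lambda>t. integral ?B (\<lambda>x. F (t *\<^sub>R x))) has_field_derivative integral ?B (\<lambda>x. DF (1 *\<^sub>R x) x)) (at 1 within ?U)"
    by (rule leibniz_rule_field_derivative[where fx="\<lambda>t x. DF (t *\<^sub>R x) x"]) (use fx int cont in simp_all)
  have sc: "integral ?B (\<lambda>x. F (t *\<^sub>R x)) = I / t ^ ?N" if t: "t \<in> ?U" for t
  proof -
    have z: "F (t *\<^sub>R x) = 0" if "norm x > 2 * R" for x
    proof -
      have "norm (t *\<^sub>R x) = t * norm x" using t by auto
      also have "\<dots> > R"
      proof -
        have "t * norm x \<ge> (1/2) * norm x" using t by (intro mult_right_mono) auto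
        then show ?thesis using that by linarith
      qed
      finally show ?thesis using R(2) by simp
    qed
    have "((\<lambda>x. F (t *\<^sub>R x)) has_integral integral ?B (\<lambda>x. F (t *\<^sub>R x))) UNIV"
      by (rule integral_UNIV_box[OF Fs]) (use z in auto)
    then have "integral ?B (\<lambda>x. F (t *\<^sub>R x)) = integral UNIV (\<lambda>x. F (t *\<^sub>R x))"
      by (simp add: integral_unique)
    also have "\<dots> = I / t ^ ?N" unfolding I_def
      by (rule scale_UNIV[OF Fc]) (use R(2) t in auto)
    finally show ?thesis .
  qed
  have dI: "((\<lambda>t. I / t ^ ?N) has_field_derivative (- real ?N * I)) (at 1 within ?U)"
    by (auto intro!: derivative_eq_intros)
  have dI': "((\<lambda>t. integral ?B (\<lambda>x. F (t *\<^sub>R x))) has_field_derivative (- real ?N * I)) (at 1 within ?U)"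
    by (rule has_field_derivative_transform_within[OF dI, of 1]) (auto simp: sc)
  have at: "at (1::real) within ?U = at 1" by (rule at_within_interior) auto
  have eq: "integral ?B (\<lambda>x. DF x x) = - real ?N * I"
    using DERIV_unique[OF L[unfolded at] dI'[unfolded at]] by simp
  have "((\<lambda>x. DF x x) has_integral integral ?B (\<lambda>x. DF x x)) UNIV"
    by (rule integral_UNIV_box[OF C]) (use R in auto)
  then show ?thesis using eq I_def by (simp add: integral_unique)
qed

lemma smooth_onD:
  assumes "smooth_on S f"
  shows "f differentiable_on S" "\<And>v. smooth_on S (\<lambda>x. frechet_derivative f (at x) v)"
  using assms by (cases rule: smooth_on.cases, auto)+

lemma locally_zero_deriv:
  fixes u :: "'a::euclidean_space \<Rightarrow> real"
  assumes "open T" "x \<in> T" "\<And>y. y \<in> T \<Longrightarrow> u y = 0"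
  shows "(u has_derivative (\<lambda>_. 0)) (at x)" "frechet_derivative u (at x) = (\<lambda>_. 0)"
proof -
  have "((\<lambda>_. 0::real) has_derivative (\<lambda>_. 0)) (at x)" by simp
  then show "(u has_derivative (\<lambda>_. 0)) (at x)"
    by (rule has_derivative_transform_within_open[OF _ assms(1,2)]) (use assms(3) in auto)
  then show "frechet_derivative u (at x) = (\<lambda>_. 0)" using frechet_derivative_at by metis
qed

lemma linear_comp_sum:
  fixes L :: "'a::euclidean_space \<Rightarrow> real"
  assumes "linear L"
  shows "L y = (\<Sum>b\<in>Basis. (y \<bullet> b) * L b)"
proof -
  have "L y = L (\<Sum>b\<in>Basis. (y \<bullet> b) *\<^sub>R b)" by (simp add: euclidean_representation)
  also have "\<dots> = (\<Sum>b\<in>Basis. (y \<bullet> b) * L b)"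
    using assms by (simp add: linear_sum linear_cmul)
  finally show ?thesis .
qed

lemma test_fn_facts:
  fixes u :: "'a::euclidean_space \<Rightarrow> real"
  assumes "test_fn u"
  obtains r0 R where "0 < r0" "r0 < R" "\<And>x. norm x < r0 \<Longrightarrow> u x = 0" "\<And>x. norm x > R \<Longrightarrow> u x = 0"
    "\<And>x. (u has_derivative frechet_derivative u (at x)) (at x)"
    "\<And>x y. norm x < r0 \<Longrightarrow> frechet_derivative u (at x) y = 0"
    "\<And>x y. norm x > R \<Longrightarrow> frechet_derivative u (at x) y = 0"
    "continuous_on UNIV u"
    "\<And>v. continuous_on (-{0}) (\<lambda>x. frechet_derivative u (at x) v)"
proof -
  let ?S = "{x. u x \<noteq> 0}"
  have sm: "smooth_on (-{0}) u" and cp: "compact (closure ?S)" and z: "0 \<notin> closure ?S"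
    using assms unfolding test_fn_def by auto
  from z obtain e where e: "e > 0" "\<And>y. y \<in> ?S \<Longrightarrow> \<not> dist y 0 < e"
    unfolding closure_approachable by blast
  have ue: "u x = 0" if "norm x < e" for x using e(2)[of x] that by auto
  have "bounded ?S" using cp by simp
  then obtain a where a: "\<And>x. x \<in> ?S \<Longrightarrow> norm x \<le> a" unfolding bounded_iff by blast
  define R where "R = max a e + 1"
  have uR: "u x = 0" if "norm x > R" for x using a[of x] that unfolding R_def by force
  have du: "u differentiable_on (-{0})" using smooth_onD(1)[OF sm] .
  have dus: "smooth_on (-{0}) (\<lambda>x. frechet_derivative u (at x) v)" for v using smooth_onD(2)[OF sm] .
  have hd: "(u has_derivative frechet_derivative u (at x)) (at x)" for x
  proof (cases "x = 0")
    case True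
    have "(u has_derivative (\<lambda>_. 0)) (at x)" "frechet_derivative u (at x) = (\<lambda>_. 0)"
      using locally_zero_deriv[of "ball 0 e" x u] ue e True by auto
    then show ?thesis by simp
  next
    case False
    then have "u differentiable at x" using du differentiable_on_eq_differentiable_at[of "-{0}" u] by auto
    then show ?thesis using frechet_derivative_works by blast
  qed
  have z1: "frechet_derivative u (at x) y = 0" if "norm x < e" for x y
    using locally_zero_deriv(2)[of "ball 0 e" x u] ue that by auto
  have z2: "frechet_derivative u (at x) y = 0" if "norm x > R" for x y
  proof -
    have "open {x::'a. norm x > R}" by (intro open_Collect_less continuous_intros)
    then show ?thesis using locally_zero_deriv(2)[of "{x. norm x > R}" x u] uR that by auto
  qed
  have cu: "continuous_on UNIV u"
    using hd by (meson continuous_at_imp_continuous_on has_derivative_continuous)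
  have cd: "continuous_on (-{0}) (\<lambda>x. frechet_derivative u (at x) v)" for v
    using smooth_onD(1)[OF dus[of v]] differentiable_imp_continuous_on by blast
  show ?thesis
    by (rule that[of e R]) (use e ue uR hd z1 z2 cu cd R_def in auto)
qed

lemma cont_fd_apply:
  fixes u :: "'a::euclidean_space \<Rightarrow> real"
  assumes "\<And>x. x \<in> T \<Longrightarrow> linear (frechet_derivative u (at x))"
    "\<And>v. continuous_on T (\<lambda>x. frechet_derivative u (at x) v)"
    "continuous_on T g"
  shows "continuous_on T (\<lambda>x. frechet_derivative u (at x) (g x))"
proof -
  have "continuous_on T (\<lambda>x. \<Sum>b\<in>Basis. (g x \<bullet> b) * frechet_derivative u (at x) b)"
    by (intro continuous_intros assms(2,3))
  then show ?thesis
    by (rule continuous_on_eq) (use linear_comp_sum assms(1) in metis)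
qed

lemma pw_ident:
 fixes N m r p E U D :: real
 assumes "r > 0"
 shows "D^2*E - (((N-2)^2/4) * (U^2/r^2*E) + m^2*(N-1)^2 * (p^2*r^2*U^2*E) + m*(N-1)*(N-2+2*m) * (p*U^2*E)) + (2*U*(r*D)*(((N-2)/2/r^2 + m*(N-1)*p)*E) + U^2*(((-2*((N-2)/2)/r^2 + m*(N-1)*(2*m-2)*p)*E + ((N-2)/2/r^2 + m*(N-1)*p)*E*((N-1)*(2*m)*(p*r^2)))) + N*(U^2*(((N-2)/2/r^2 + m*(N-1)*p)*E))) = (D + ((N-2)/2/r + m*(N-1)*p*r)*U)^2*E"
  using assms by (simp add: field_simps power2_eq_square)

lemma hderiv_test:
  fixes A B N :: real and m :: nat
  assumes "r > 0"
  shows "((\<lambda>r. (A / r^2 + B * r^(2*m-2)) * exp ((N - 1) * r^(2*m))) has_real_derivative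
     (-(2 * A) / r^3 + B * (real (2*m-2) * r^(2*m-2-1))) * exp ((N - 1) * r^(2*m))
     + (A / r^2 + B * r^(2*m-2)) * (exp ((N - 1) * r^(2*m)) * ((N - 1) * (real (2*m) * r^(2*m-1))))) (at r)"
  using assms
  apply (auto intro!: derivative_eq_intros)
  apply (simp add: eval_nat_numeral field_simps)
  done

lemma part1:
  fixes u :: "'a::euclidean_space \<Rightarrow> real" and m :: nat
  assumes N3: "DIM('a) \<ge> 3" and m1: "m \<ge> 1" and tu: "test_fn u"
  shows "model_integral m (\<lambda>x. (radial_deriv u x)\<^sup>2) \<ge> hardy_rhs m ((real DIM('a) - 2)\<^sup>2 / 4) u"
proof -
  obtain r0 R where r0: "0 < r0" "r0 < R" and u0: "\<And>x. norm x < r0 \<Longrightarrow> u x = 0"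
    and uR: "\<And>x. norm x > R \<Longrightarrow> u x = 0"
    and hd: "\<And>x. (u has_derivative frechet_derivative u (at x)) (at x)"
    and z1: "\<And>x y. norm x < r0 \<Longrightarrow> frechet_derivative u (at x) y = 0"
    and z2: "\<And>x y. norm x > R \<Longrightarrow> frechet_derivative u (at x) y = 0"
    and cu: "continuous_on UNIV u"
    and cd: "\<And>v. continuous_on (-{0}) (\<lambda>x. frechet_derivative u (at x) v)"
    by (rule test_fn_facts[OF tu]) blast
  define N where "N = real DIM('a)"
  define Du where "Du x = frechet_derivative u (at x)" for x
  have hd': "(u has_derivative Du x) (at x)" for x unfolding Du_def by (rule hd)
  have lin: "linear (Du x)" for x using hd' has_derivative_linear by blast
  define A where "A = (N - 2) / 2"
  define B where "B = real m * (N - 1)"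
  define E where "E r = exp ((N - 1) * r^(2*m))" for r
  define h where "h r = (A / r^2 + B * r^(2*m-2)) * E r" for r
  define h' where "h' r = (-(2 * A) / r^3 + B * (real (2*m-2) * r^(2*m-2-1))) * E r
     + (A / r^2 + B * r^(2*m-2)) * (E r * ((N - 1) * (real (2*m) * r^(2*m-1))))" for r
  have hder: "(h has_real_derivative h' r) (at r)" if "r > 0" for r
    unfolding h_def h'_def E_def using hderiv_test[OF that] .
  have rh': "r * h' r = (-2*A/r^2 + B*(2*real m-2)*r^(2*m-2)) * E r + (A/r^2 + B*r^(2*m-2)) * E r * ((N-1)*(2*real m)*(r^(2*m-2)*r^2))"
    if r: "r > 0" for r
  proof -
    obtain j where mj: "m = Suc j" using m1 by (cases m) auto
    have a: "real (2*m-2) * r^(2*m-2-1) * r = (2*real m-2) * r^(2*m-2)"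
    proof (cases j)
      case 0 then show ?thesis using mj by simp
    next
      case (Suc i)
      then have "r^(2*m-2-1) * r = r^(2*m-2)" using mj by (simp add: power_Suc2 del: power_Suc)
      then show ?thesis using m1 by (simp add: of_nat_diff)
    qed
    have b: "r^(2*m-1) * r = r^(2*m-2) * r^2"
      using mj by (simp add: power2_eq_square)
    have "r * h' r = (-(2*A)/r^3)*E r*r + B*(real (2*m-2) * r^(2*m-2-1) * r)*E r
        + (A/r^2 + B*r^(2*m-2))*E r*(N-1)*real (2*m)*(r^(2*m-1) * r)"
      using r unfolding h'_def by (simp add: field_simps)
    also have "\<dots> = (-(2*A)/r^3)*E r*r + B*((2*real m-2) * r^(2*m-2))*E r
        + (A/r^2 + B*r^(2*m-2))*E r*(N-1)*real (2*m)*(r^(2*m-2) * r^2)"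
      unfolding a b ..
    also have "\<dots> = (-2*A/r^2 + B*(2*real m-2)*r^(2*m-2)) * E r + (A/r^2 + B*r^(2*m-2)) * E r * ((N-1)*(2*real m)*(r^(2*m-2)*r^2))"
      using r by (simp add: field_simps eval_nat_numeral)
    finally show ?thesis .
  qed
  have Ndim: "real (DIM('a) - 1) = N - 1" unfolding N_def using N3 by (simp add: of_nat_diff)
  have vd: "vol_density m x = E (norm x)" if "x \<noteq> 0" for x :: 'a
    using that unfolding vol_density_def psi_def E_def
    by (simp add: exp_of_nat_mult[symmetric] Ndim N_def)
  have vd0: "vol_density m (0::'a) = 0"
    using N3 unfolding vol_density_def psi_def by simp
  define F where "F x = u x * u x * h (norm x)" for x
  define DF where "DF x y = 2 * u x * Du x y * h (norm x) + u x * u x * (h' (norm x) * (inner x y / norm x))" for x y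
  have hasF: "(F has_derivative DF x) (at x)" for x
  proof (cases "norm x < r0")
    case True
    have "(F has_derivative (\<lambda>_. 0)) (at x)"
      using locally_zero_deriv(1)[of "ball 0 r0" x F] True u0 by (auto simp: F_def)
    moreover have "DF x = (\<lambda>_. 0)" using u0[OF True] by (auto simp: DF_def fun_eq_iff)
    ultimately show ?thesis by simp
  next
    case False
    then have x0: "x \<noteq> 0" "norm x > 0" using r0 by auto
    have hn: "((\<lambda>x. h (norm x)) has_derivative (\<lambda>y. h' (norm x) * (y \<bullet> sgn x))) (at x)"
      using has_derivative_compose[OF has_derivative_norm[OF x0(1)] hder[OF x0(2), unfolded has_field_derivative_def]] by simp
    have "(F has_derivative (\<lambda>y. u x * u x * (h' (norm x) * (y \<bullet> sgn x)) + (u x * Du x y + Du x y * u x) * h (norm x))) (at x)"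
      unfolding F_def by (rule has_derivative_mult[OF has_derivative_mult[OF hd' hd'] hn])
    moreover have "(\<lambda>y. u x * u x * (h' (norm x) * (y \<bullet> sgn x)) + (u x * Du x y + Du x y * u x) * h (norm x)) = DF x"
      by (auto simp: DF_def fun_eq_iff sgn_div_norm inner_commute algebra_simps divide_inverse)
    ultimately show ?thesis by simp
  qed
  have contH: "continuous_on (-{0}) (\<lambda>x::'a. h (norm x))" "continuous_on (-{0}) (\<lambda>x::'a. h' (norm x))"
    unfolding h_def h'_def E_def by (auto intro!: continuous_intros)
  have cDu: "continuous_on (-{0}) (\<lambda>x. Du x (g x))" if "continuous_on (-{0}) g" for g
    unfolding Du_def by (rule cont_fd_apply) (use lin[unfolded Du_def] cd that in auto)
  have cu': "continuous_on (-{0}) u" using cu continuous_on_subset by blast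
  have cDuid: "continuous_on (-{0}) (\<lambda>x. Du x x)" using cDu[OF continuous_on_id] .
  have cDFxx: "continuous_on UNIV (\<lambda>x. DF x x)"
    by (rule glue_cont[OF r0(1)]) (auto simp: DF_def u0 intro!: continuous_intros cu' cDuid contH)
  have FR: "F x = 0" "DF x x = 0" if "norm x > R" for x using uR[OF that] by (auto simp: F_def DF_def)
  have cF: "continuous_on UNIV F"
    using hasF by (meson continuous_at_imp_continuous_on has_derivative_continuous)
  have dil: "integral UNIV (\<lambda>x. DF x x) = - real DIM('a) * integral UNIV F"
    by (rule dilation_identity[OF hasF cDFxx, of R]) (use r0 FR in auto)
  have iDF: "integral UNIV (\<lambda>x. DF x x) = (\<integral>x. DF x x \<partial>lborel)"
    by (rule hk_lborel[OF cDFxx, of R]) (use FR in auto)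
  have iF: "integral UNIV F = (\<integral>x. F x \<partial>lborel)"
    by (rule hk_lborel[OF cF, of R]) (use FR in auto)
  have intDF: "integrable lborel (\<lambda>x. DF x x)"
    by (rule integrable_cs[OF cDFxx, of R]) (use FR in auto)
  have intF: "integrable lborel F"
    by (rule integrable_cs[OF cF, of R]) (use FR in auto)
  define Dr where "Dr x = radial_deriv u x" for x
  have Dr_eq: "Dr x = Du x (x /\<^sub>R norm x)" for x unfolding Dr_def radial_deriv_def Du_def ..
  have cvd: "continuous_on (-{0}) (vol_density m :: 'a \<Rightarrow> real)"
  proof (rule continuous_on_eq[of _ "\<lambda>x. E (norm x)"])
    show "continuous_on (- {0}) (\<lambda>x::'a. E (norm x))" unfolding E_def by (intro continuous_intros)
  qed (use vd in auto)
  have cDr: "continuous_on (-{0}) Dr"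
    unfolding Dr_eq by (rule cDu) (auto intro!: continuous_intros)
  have Dr0: "Dr x = 0" if "norm x < r0 \<or> norm x > R" for x
    using that z1 z2 unfolding Dr_def radial_deriv_def by auto
  have u0': "u x = 0" if "norm x < r0 \<or> norm x > R" for x using that u0 uR by auto
  define g1 where "g1 x = (Dr x)\<^sup>2 * vol_density m x" for x
  define g2 where "g2 x = (u x)\<^sup>2 / (norm x)\<^sup>2 * vol_density m x" for x
  define g3 where "g3 x = norm x ^ (4*m-2) * (u x)\<^sup>2 * vol_density m x" for x
  define g4 where "g4 x = norm x ^ (2*m-2) * (u x)\<^sup>2 * vol_density m x" for x
  have ig1: "integrable lborel g1"
    by (rule integrable_cs[OF glue_cont[OF r0(1)], of _ R])
       (auto simp: g1_def Dr0 intro!: continuous_intros cDr cvd)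
  have ig2: "integrable lborel g2"
    by (rule integrable_cs[OF glue_cont[OF r0(1)], of _ R])
       (auto simp: g2_def u0' intro!: continuous_intros cu' cvd)
  have ig3: "integrable lborel g3"
    by (rule integrable_cs[OF glue_cont[OF r0(1)], of _ R])
       (auto simp: g3_def u0' intro!: continuous_intros cu' cvd)
  have ig4: "integrable lborel g4"
    by (rule integrable_cs[OF glue_cont[OF r0(1)], of _ R])
       (auto simp: g4_def u0' intro!: continuous_intros cu' cvd)
  define c2 where "c2 = (N - 2)\<^sup>2 / 4"
  define c3 where "c3 = (real m)\<^sup>2 * (N - 1)\<^sup>2"
  define c4 where "c4 = real m * (N - 1) * (N - 2 + 2 * real m)"
  have pw: "c2 * g2 x + c3 * g3 x + c4 * g4 x - (DF x x + N * F x) \<le> g1 x" for x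
  proof (cases "x = 0")
    case True
    then show ?thesis using u0[of x] r0 by (simp add: g1_def g2_def g3_def g4_def vd0 F_def DF_def)
  next
    case False
    define r where "r = norm x"
    have r: "r > 0" using False r_def by auto
    have Dux: "Du x x = r * Dr x"
    proof -
      have "x = r *\<^sub>R (x /\<^sub>R norm x)" using False r_def by simp
      then have "Du x x = Du x (r *\<^sub>R (x /\<^sub>R norm x))" by metis
      then show ?thesis using linear_cmul[OF lin] Dr_eq by simp
    qed
    have ixx: "inner x x / norm x = r" using False r_def by (simp add: dot_square_norm power2_eq_square)
    have DFxx: "DF x x = 2 * u x * (r * Dr x) * h r + u x * u x * (r * h' r)"
      unfolding DF_def Dux ixx unfolding r_def[symmetric] by (simp add: algebra_simps)
    have p4: "r ^ (4*m-2) = (r^(2*m-2))^2 * r^2"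
    proof -
      have e: "4*m-2 = (2*m-2) + (2*m-2) + 2" using m1 by simp
      show ?thesis unfolding e by (simp only: power_add power2_eq_square mult.assoc)
    qed
    have vdx: "vol_density m x = E r" using vd[OF False] r_def by simp
    have Epos: "E r > 0" unfolding E_def by simp
    have key1: "g1 x - (c2 * g2 x + c3 * g3 x + c4 * g4 x) + (DF x x + N * F x) = (Dr x)^2*(E r) - (((N-2)^2/4) * ((u x)^2/r^2*(E r)) + (real m)^2*(N-1)^2 * ((r^(2*m-2))^2*r^2*(u x)^2*(E r)) + (real m)*(N-1)*(N-2+2*(real m)) * ((r^(2*m-2))*(u x)^2*(E r))) + (2*(u x)*(r*(Dr x))*(((N-2)/2/r^2 + (real m)*(N-1)*(r^(2*m-2)))*(E r)) + (u x)^2*(((-2*((N-2)/2)/r^2 + (real m)*(N-1)*(2*(real m)-2)*(r^(2*m-2)))*(E r) + ((N-2)/2/r^2 + (real m)*(N-1)*(r^(2*m-2)))*(E r)*((N-1)*(2*(real m))*((r^(2*m-2))*r^2)))) + N*((u x)^2*(((N-2)/2/r^2 + (real m)*(N-1)*(r^(2*m-2)))*(E r))))"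
      unfolding g1_def g2_def g3_def g4_def c2_def c3_def c4_def DFxx F_def vdx p4 rh'[OF r] h_def A_def B_def r_def[symmetric]
      using r by (simp add: field_simps power2_eq_square)
    have key: "g1 x - (c2 * g2 x + c3 * g3 x + c4 * g4 x) + (DF x x + N * F x)
        = (Dr x + ((N-2)/2/r + real m*(N-1)*r^(2*m-2)*r)*u x)^2 * E r"
      unfolding key1 by (rule pw_ident[OF r])
    have "0 \<le> (Dr x + ((N-2)/2/r + real m*(N-1)*r^(2*m-2)*r)*u x)^2 * E r"
      using Epos by simp
    then show ?thesis using key by linarith
  qed
  have iT: "integrable lborel (\<lambda>x. c2 * g2 x + c3 * g3 x + c4 * g4 x - (DF x x + N * F x))"
    by (intro Bochner_Integration.integrable_diff Bochner_Integration.integrable_add Bochner_Integration.integrable_mult_right) (use ig2 ig3 ig4 intDF intF in auto)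
  have mono: "(\<integral>x. c2 * g2 x + c3 * g3 x + c4 * g4 x - (DF x x + N * F x) \<partial>lborel) \<le> (\<integral>x. g1 x \<partial>lborel)"
    by (rule integral_mono[OF iT ig1 pw])
  have "(\<integral>x. c2 * g2 x + c3 * g3 x + c4 * g4 x - (DF x x + N * F x) \<partial>lborel)
      = c2 * (\<integral>x. g2 x \<partial>lborel) + c3 * (\<integral>x. g3 x \<partial>lborel) + c4 * (\<integral>x. g4 x \<partial>lborel)
        - ((\<integral>x. DF x x \<partial>lborel) + N * (\<integral>x. F x \<partial>lborel))"
    using ig2 ig3 ig4 intDF intF
    by (simp add: Bochner_Integration.integral_diff Bochner_Integration.integral_add Bochner_Integration.integral_mult_right)
  also have "(\<integral>x. DF x x \<partial>lborel) + N * (\<integral>x. F x \<partial>lborel) = 0"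
    using dil iDF iF N_def by simp
  finally have eq: "(\<integral>x. c2 * g2 x + c3 * g3 x + c4 * g4 x - (DF x x + N * F x) \<partial>lborel)
      = c2 * (\<integral>x. g2 x \<partial>lborel) + c3 * (\<integral>x. g3 x \<partial>lborel) + c4 * (\<integral>x. g4 x \<partial>lborel)" by simp
  have "hardy_rhs m ((real DIM('a) - 2)\<^sup>2 / 4) u = c2 * (\<integral>x. g2 x \<partial>lborel) + c3 * (\<integral>x. g3 x \<partial>lborel) + c4 * (\<integral>x. g4 x \<partial>lborel)"
    unfolding hardy_rhs_def model_integral_def c2_def c3_def c4_def g2_def g3_def g4_def N_def ..
  moreover have "model_integral m (\<lambda>x. (radial_deriv u x)\<^sup>2) = (\<integral>x. g1 x \<partial>lborel)"
    unfolding model_integral_def g1_def Dr_def ..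
  ultimately show ?thesis using mono eq by simp
qed

definition G :: "real \<Rightarrow> real" where "G t = En 0 (2 + t) * En 0 (-1 - t)"
definition G' :: "real \<Rightarrow> real" where "G' t = En 2 (2 + t) * En 0 (-1 - t) - En 0 (2 + t) * En 2 (-1 - t)"

lemma En_nonneg: "En n t \<ge> 0" by (simp add: En_def)
lemma En_pos: "t > 0 \<Longrightarrow> En n t > 0" by (simp add: En_def)
lemma En_zero: "t \<le> 0 \<Longrightarrow> En n t = 0" by (simp add: En_def)

lemma G_deriv: "(G has_real_derivative G' t) (at t)"
proof -
  have e: "\<And>s. ((En 0) has_real_derivative En 2 s) (at s)" using En_deriv[of 0] by (simp add: numeral_2_eq_2)
  have a: "((\<lambda>t. En 0 (2 + t)) has_real_derivative En 2 (2 + t) * 1) (at t)"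
    by (rule DERIV_chain2[OF e]) (auto intro!: derivative_eq_intros)
  have b: "((\<lambda>t. En 0 (-1 - t)) has_real_derivative En 2 (-1 - t) * (-1)) (at t)"
    by (rule DERIV_chain2[OF e]) (auto intro!: derivative_eq_intros)
  show ?thesis unfolding G_def[abs_def] G'_def using DERIV_mult[OF a b] by (simp add: algebra_simps)
qed

lemma G_cont: "continuous_on A G" unfolding G_def[abs_def]
  by (intro continuous_intros continuous_on_compose2[OF En_cont[of UNIV]]) auto
lemma G'_cont: "continuous_on A G'" unfolding G'_def[abs_def]
  by (intro continuous_intros continuous_on_compose2[OF En_cont[of UNIV]]) auto
lemma G_nonneg: "G t \<ge> 0" unfolding G_def by (simp add: En_nonneg)
lemma G_pos: "-2 < t \<Longrightarrow> t < -1 \<Longrightarrow> G t > 0" unfolding G_def by (simp add: En_pos)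
lemma G_zero: "\<not> (-2 < t \<and> t < -1) \<Longrightarrow> G t = 0" unfolding G_def
  by (auto simp: En_zero)
lemma G'_zero: "\<not> (-2 < t \<and> t < -1) \<Longrightarrow> G' t = 0" unfolding G'_def
  by (auto simp: En_zero)

lemma G'_bound: obtains C where "C \<ge> 0" "\<And>t. (G' t)\<^sup>2 \<le> C * ((G (t + 1/3))\<^sup>2 + (G t)\<^sup>2 + (G (t - 1/3))\<^sup>2)"
proof -
  define S where "S t = (G (t + 1/3))\<^sup>2 + (G t)\<^sup>2 + (G (t - 1/3))\<^sup>2" for t
  have cS: "continuous_on {-2..-1} S" unfolding S_def
    by (intro continuous_intros continuous_on_compose2[OF G_cont[of UNIV]]) auto
  have Spos: "S t > 0" if "t \<in> {-2..-1}" for t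
  proof -
    have "0 \<le> (G (t + 1/3))\<^sup>2" "0 \<le> (G t)\<^sup>2" "0 \<le> (G (t - 1/3))\<^sup>2" by auto
    moreover have "(G (t + 1/3))\<^sup>2 > 0 \<or> (G t)\<^sup>2 > 0 \<or> (G (t - 1/3))\<^sup>2 > 0"
    proof -
      consider "t \<le> -5/3" | "-5/3 < t \<and> t < -4/3" | "t \<ge> -4/3" by linarith
      then show ?thesis
      proof cases
        case 1 then have "G (t + 1/3) > 0" using that by (intro G_pos) auto
        then show ?thesis by auto
      next
        case 2 then have "G t > 0" by (intro G_pos) auto
        then show ?thesis by auto
      next
        case 3 then have "G (t - 1/3) > 0" using that by (intro G_pos) auto
        then show ?thesis by auto
      qed
    qed
    ultimately show ?thesis unfolding S_def by linarith
  qed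
  obtain t0 where t0: "t0 \<in> {-2..-1}" "\<And>t. t \<in> {-2..-1} \<Longrightarrow> S t0 \<le> S t"
    using continuous_attains_inf[OF compact_Icc _ cS] by fastforce
  have cG': "continuous_on {-2..-1} (\<lambda>t. (G' t)\<^sup>2)"
    by (intro continuous_intros G'_cont)
  obtain t1 where t1: "t1 \<in> {-2..-1}" "\<And>t. t \<in> {-2..-1} \<Longrightarrow> (G' t)\<^sup>2 \<le> (G' t1)\<^sup>2"
    using continuous_attains_sup[OF compact_Icc _ cG'] by fastforce
  define C where "C = (G' t1)\<^sup>2 / S t0"
  have S0: "S t0 > 0" using Spos t0 by auto
  have Snn: "S t \<ge> 0" for t unfolding S_def by auto
  show ?thesis
  proof (rule that[of C])
    show "C \<ge> 0" unfolding C_def using S0 by auto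
    fix t
    show "(G' t)\<^sup>2 \<le> C * ((G (t + 1/3))\<^sup>2 + (G t)\<^sup>2 + (G (t - 1/3))\<^sup>2)"
    proof (cases "t \<in> {-2..-1}")
      case True
      have "(G' t)\<^sup>2 \<le> (G' t1)\<^sup>2" using t1 True by auto
      also have "\<dots> = C * S t0" unfolding C_def using S0 by simp
      also have "\<dots> \<le> C * S t" using t0 True \<open>C \<ge> 0\<close> S0 unfolding C_def
        by (intro mult_left_mono) auto
      finally show ?thesis unfolding S_def .
    next
      case False
      then have "G' t = 0" by (intro G'_zero) auto
      then show ?thesis using \<open>C \<ge> 0\<close> Snn[of t] unfolding S_def by simp
    qed
  qed
qed

lemma radial_nice:
  fixes f :: "real \<Rightarrow> real"
  assumes cf: "continuous_on UNIV f" and z: "\<And>s. s < \<alpha> \<or> s > \<beta> \<Longrightarrow> f s = 0"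
  shows "continuous_on UNIV (\<lambda>x::'a::euclidean_space. (1 / norm x ^ DIM('a)) * f (ln (norm x)))"
    and "\<And>x::'a. norm x > exp \<beta> \<Longrightarrow> (1 / norm x ^ DIM('a)) * f (ln (norm x)) = 0"
    and "integrable lborel (\<lambda>x::'a. (1 / norm x ^ DIM('a)) * f (ln (norm x)))"
proof -
  show c: "continuous_on UNIV (\<lambda>x::'a. (1 / norm x ^ DIM('a)) * f (ln (norm x)))"
  proof (rule glue_cont[of "exp \<alpha>"])
    show "continuous_on (- {0}) (\<lambda>x::'a. 1 / norm x ^ DIM('a) * f (ln (norm x)))"
    proof -
      have "continuous_on (- {0}) (\<lambda>x::'a. ln (norm x))" by (intro continuous_intros) auto
      then have "continuous_on (- {0}) (\<lambda>x::'a. f (ln (norm x)))"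
        by (rule continuous_on_compose2[OF cf]) auto
      moreover have "continuous_on (- {0}) (\<lambda>x::'a. 1 / norm x ^ DIM('a))" by (intro continuous_intros) auto
      ultimately show ?thesis by (intro continuous_on_mult)
    qed
    fix x :: 'a assume x: "norm x < exp \<alpha>"
    show "1 / norm x ^ DIM('a) * f (ln (norm x)) = 0"
    proof (cases "x = 0")
      case False
      then have "ln (norm x) < ln (exp \<alpha>)" using x by (subst ln_less_cancel_iff) auto
      then have "ln (norm x) < \<alpha>" by simp
      then show ?thesis using z by simp
    qed simp
  qed simp
  show zz: "\<And>x::'a. norm x > exp \<beta> \<Longrightarrow> (1 / norm x ^ DIM('a)) * f (ln (norm x)) = 0"
  proof -
    fix x :: 'a assume "norm x > exp \<beta>"
    then have "ln (norm x) > ln (exp \<beta>)" by (subst ln_less_cancel_iff) auto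
    then have "ln (norm x) > \<beta>" by simp
    then show "(1 / norm x ^ DIM('a)) * f (ln (norm x)) = 0" using z by simp
  qed
  show "integrable lborel (\<lambda>x::'a. (1 / norm x ^ DIM('a)) * f (ln (norm x)))"
    by (rule integrable_cs[OF c]) (use zz in auto)
qed

lemma trans_inv:
  fixes f :: "real \<Rightarrow> real"
  assumes cf: "continuous_on UNIV f" and z: "\<And>s. s < \<alpha> \<or> s > \<beta> \<Longrightarrow> f s = 0"
  shows "(\<integral>x. (1 / norm (x::'a::euclidean_space) ^ DIM('a)) * f (ln (norm x) + c) \<partial>lborel)
       = (\<integral>x. (1 / norm (x::'a) ^ DIM('a)) * f (ln (norm x)) \<partial>lborel)"
proof -
  define g where "g x = (1 / norm x ^ DIM('a)) * f (ln (norm x))" for x :: 'a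
  define g2 where "g2 x = (1 / norm x ^ DIM('a)) * f (ln (norm x) + c)" for x :: 'a
  have cf2: "continuous_on UNIV (\<lambda>s. f (s + c))"
    by (intro continuous_on_compose2[OF cf] continuous_intros) auto
  have z2: "f (s + c) = 0" if "s < \<alpha> - c \<or> s > \<beta> - c" for s using z that by auto
  note n1 = radial_nice[OF cf z, where 'a='a, folded g_def]
  note n2 = radial_nice[OF cf2 z2, where 'a='a, folded g2_def]
  have sc: "integral UNIV (\<lambda>x. g (exp c *\<^sub>R x)) = integral UNIV g / exp c ^ DIM('a)"
    by (rule scale_UNIV[OF n1(1) n1(2)]) auto
  have pt: "g (exp c *\<^sub>R x) = (1 / exp c ^ DIM('a)) *\<^sub>R g2 x" for x
  proof (cases "x = 0")
    case True then show ?thesis by (simp add: g_def g2_def zero_power DIM_positive)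
  next
    case False
    have "ln (exp c * norm x) = c + ln (norm x)" using False by (simp add: ln_mult)
    then show ?thesis using False
      by (simp add: g_def g2_def power_mult_distrib algebra_simps)
  qed
  have "integral UNIV g2 / exp c ^ DIM('a) = integral UNIV g / exp c ^ DIM('a)"
    using sc unfolding pt integral_cmul by simp
  then have "integral UNIV g2 = integral UNIV g" by simp
  moreover have "integral UNIV g2 = (\<integral>x. g2 x \<partial>lborel)" by (rule hk_lborel[OF n2(1) n2(2)]) auto
  moreover have "integral UNIV g = (\<integral>x. g x \<partial>lborel)" by (rule hk_lborel[OF n1(1) n1(2)]) auto
  ultimately have "(\<integral>x. g2 x \<partial>lborel) = (\<integral>x. g x \<partial>lborel)" by simp
  then show ?thesis unfolding g_def g2_def .
qed

lemma integral_pos_cont: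
  fixes f :: "'a::euclidean_space \<Rightarrow> real"
  assumes c: "continuous_on UNIV f" and nn: "\<And>x. f x \<ge> 0" and i: "integrable lborel f" and p: "f x0 > 0"
  shows "(\<integral>x. f x \<partial>lborel) > 0"
proof -
  have "isCont f x0" using c continuous_on_eq_continuous_at by blast
  then obtain e where e: "e > 0" "\<And>x. dist x x0 < e \<Longrightarrow> dist (f x) (f x0) < f x0 / 2"
    unfolding continuous_at_eps_delta using p by (metis half_gt_zero)
  define d where "d = f x0 / 2"
  have d: "d > 0" using p d_def by auto
  have le: "indicator (cball x0 (e/2)) x *\<^sub>R d \<le> f x" for x
  proof (cases "x \<in> cball x0 (e/2)")
    case True
    then have "dist x x0 < e" using e(1) by (simp add: dist_commute)
    then have "dist (f x) (f x0) < f x0 / 2" using e(2) by blast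
    then have "f x \<ge> d" unfolding d_def dist_real_def by linarith
    then show ?thesis using True by simp
  next
    case False then show ?thesis using nn by simp
  qed
  have ii: "integrable lborel (\<lambda>x. indicator (cball x0 (e/2)) x *\<^sub>R d)"
    by (rule borel_integrable_compact) auto
  have "(\<integral>x. indicator (cball x0 (e/2)) x *\<^sub>R d \<partial>lborel) = measure lborel (cball x0 (e/2)) * d"
    by simp
  moreover have "measure lborel (cball x0 (e/2)) > 0" using content_cball_pos[of "e/2" x0] e by simp
  ultimately have A: "(\<integral>x. indicator (cball x0 (e/2)) x *\<^sub>R d \<partial>lborel) > 0" using d by simp
  have B: "(\<integral>x. indicator (cball x0 (e/2)) x *\<^sub>R d \<partial>lborel) \<le> (\<integral>x. f x \<partial>lborel)"
    by (rule integral_mono[OF ii i le])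
  show ?thesis using A B by linarith
qed

lemma young: fixes X Y e :: real assumes "e > 0"
  shows "(X - Y)^2 \<le> (1 + e) * Y^2 + (1 + 1/e) * X^2"
proof -
  have "0 \<le> (sqrt e * Y + X / sqrt e)^2" by simp
  also have "\<dots> = e * Y^2 + 2 * X * Y + X^2 / e"
    using assms by (simp add: power2_eq_square field_simps)
  finally have "- 2 * X * Y \<le> e * Y^2 + X^2 / e" by simp
  then show ?thesis by (simp add: power2_eq_square field_simps)
qed

lemma vd_eq: "x \<noteq> 0 \<Longrightarrow> DIM('a) \<ge> 1 \<Longrightarrow>
   vol_density m (x::'a::euclidean_space) = exp ((real DIM('a) - 1) * norm x ^ (2*m))"
  unfolding vol_density_def psi_def
  by (simp add: exp_of_nat_mult[symmetric] of_nat_diff)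

lemma vd_cont: "continuous_on (-{0}) (vol_density m :: 'a::euclidean_space \<Rightarrow> real)"
proof (rule continuous_on_eq[of _ "\<lambda>x. exp ((real DIM('a) - 1) * norm x ^ (2*m))"])
  show "continuous_on (- {0}) (\<lambda>x::'a. exp ((real DIM('a) - 1) * norm x ^ (2*m)))"
    by (intro continuous_intros)
qed (use vd_eq[where 'a='a] DIM_positive in \<open>auto simp: Suc_le_eq\<close>)

lemma vd0: "DIM('a) \<ge> 2 \<Longrightarrow> vol_density m (0::'a::euclidean_space) = 0"
  unfolding vol_density_def psi_def by simp

lemma vd_ge1: "x \<noteq> 0 \<Longrightarrow> vol_density m (x::'a::euclidean_space) \<ge> 1"
  using vd_eq[of x m] DIM_positive[where 'a='a] by (simp add: Suc_le_eq)

lemma powr_facts: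
  fixes r a :: real and n :: nat
  assumes r: "r > 0" and a: "a = (real n - 2) / 2"
  shows "(r powr (-a-1))\<^sup>2 = 1 / r ^ n" "(r powr (-a))\<^sup>2 / r\<^sup>2 = 1 / r ^ n"
proof -
  have "(r powr (-a-1))\<^sup>2 = r powr (-a-1) * r powr (-a-1)" by (simp add: power2_eq_square)
  also have "\<dots> = r powr (- real n)" by (simp add: powr_add[symmetric] a)
  also have "\<dots> = 1 / r ^ n" using r by (simp add: powr_minus_divide powr_realpow)
  finally show "(r powr (-a-1))\<^sup>2 = 1 / r ^ n" .
  have "(r powr (-a))\<^sup>2 / r\<^sup>2 = r powr (-a) * r powr (-a) * r powr (-2)"
    using r by (simp add: power2_eq_square powr_minus_divide)
  also have "\<dots> = r powr (- real n)" by (simp add: powr_add[symmetric] a)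
  also have "\<dots> = 1 / r ^ n" using r by (simp add: powr_minus_divide powr_realpow)
  finally show "(r powr (-a))\<^sup>2 / r\<^sup>2 = 1 / r ^ n" .
qed

lemma kderiv:
  fixes L a r :: real
  assumes r: "r > 0" and L: "L > 0"
  shows "((\<lambda>r. r powr (-a) * G (ln r / L)) has_real_derivative
           r powr (-a-1) * (G' (ln r / L) / L - a * G (ln r / L))) (at r)"
proof -
  have l: "((\<lambda>r. ln r / L) has_real_derivative (inverse r / L)) (at r)"
    using r L by (auto intro!: derivative_eq_intros simp: divide_inverse)
  have g: "((\<lambda>r. G (ln r / L)) has_real_derivative G' (ln r / L) * (inverse r / L)) (at r)"
    by (rule DERIV_chain2[OF G_deriv l])
  have p: "((\<lambda>r. r powr (-a)) has_real_derivative (-a) * r powr (-a - 1)) (at r)"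
    using has_real_derivative_powr[OF r, of "-a"] by simp
  have "r powr (-a-1) = r powr (-a + -1)" by simp
  also have "\<dots> = r powr (-a) * r powr (-1)" by (rule powr_add)
  also have "\<dots> = r powr (-a) * inverse r" using powr_neg_one[OF r] by (simp add: divide_inverse)
  finally have e: "r powr (-a-1) = r powr (-a) / r" by (simp add: divide_inverse)
  show ?thesis
    apply (rule DERIV_cong[OF DERIV_mult[OF p g]])
    unfolding e using r L by (simp add: field_simps)
qed

lemma family:
  fixes L e C :: real and m :: nat
  assumes N3: "DIM('a::euclidean_space) \<ge> 3" and m1: "m \<ge> 1" and L: "L \<ge> 1" and e: "e > 0" and C: "C \<ge> 0"
    and Cb: "\<And>t. (G' t)\<^sup>2 \<le> C * ((G (t + 1/3))\<^sup>2 + (G t)\<^sup>2 + (G (t - 1/3))\<^sup>2)"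
  defines "a \<equiv> (real DIM('a) - 2) / 2"
  defines "u \<equiv> (\<lambda>x::'a. norm x powr (-a) * (En 0 (2 + (1/L) * ln (norm x)) * En 0 (-1 + (-(1/L)) * ln (norm x))))"
  defines "T \<equiv> (\<lambda>d (x::'a). (1 / norm x ^ DIM('a)) * (G (ln (norm x) / L + d))\<^sup>2)"
  defines "A \<equiv> (\<integral>x. T 0 x \<partial>lborel)"
  defines "K \<equiv> exp ((real DIM('a) - 1) * exp (-L))"
  shows "test_fn u \<and> A > 0 \<and> model_integral m (\<lambda>x. (radial_deriv u x)\<^sup>2) \<le> K * ((1+e)*a\<^sup>2 + 3*(1+1/e)*C/L\<^sup>2) * A
         \<and> (\<forall>c\<ge>0. hardy_rhs m c u \<ge> c * A)"
proof -
  have L0: "L > 0" using L by simp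
  have a_pos: "a > 0" using N3 unfolding a_def by simp
  have uG: "u x = norm x powr (-a) * G (ln (norm x) / L)" for x
    unfolding u_def G_def by (simp add: divide_inverse algebra_simps)
  have alg_u: "alg u" unfolding u_def by (intro alg.intros)
  have lnb: "exp (-2*L) < norm x \<and> norm x < exp (-L)" if "x \<noteq> 0" "-2 < ln (norm x) / L" "ln (norm x) / L < -1" for x :: 'a
  proof -
    have "-2*L < ln (norm x)" "ln (norm x) < -L" using that L0 by (auto simp: field_simps)
    then have "exp (-2*L) < exp (ln (norm x))" "exp (ln (norm x)) < exp (-L)" by auto
    then show ?thesis using that by simp
  qed
  have supp: "x \<noteq> 0 \<and> exp (-2*L) < norm x \<and> norm x < exp (-L)" if "u x \<noteq> 0" for x
  proof -
    have x: "x \<noteq> 0" using that uG by auto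
    have "G (ln (norm x) / L) \<noteq> 0" using that uG by auto
    then have "-2 < ln (norm x) / L" "ln (norm x) / L < -1" using G_zero by blast+
    then show ?thesis using lnb x by blast
  qed
  have tu: "test_fn u"
  proof -
    let ?Ann = "{x::'a. exp (-2*L) \<le> norm x \<and> norm x \<le> exp (-L)}"
    have cl: "closed ?Ann" by (intro closed_Collect_conj closed_Collect_le continuous_intros)
    have sub: "{x. u x \<noteq> 0} \<subseteq> ?Ann" using supp by fastforce
    have cs: "closure {x. u x \<noteq> 0} \<subseteq> ?Ann" by (rule closure_minimal[OF sub cl])
    have "bounded ?Ann" by (rule bounded_subset[of "cball 0 (exp (-L))"]) auto
    then have "bounded {x. u x \<noteq> 0}" using sub bounded_subset by blast
    moreover have "0 \<notin> ?Ann" by simp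
    ultimately show ?thesis unfolding test_fn_def using alg_smooth[OF alg_u] cs by auto
  qed
  have cu: "continuous_on (-{0}) u"
    using smooth_onD(1)[OF alg_smooth[OF alg_u]] differentiable_imp_continuous_on by blast
  have Dform: "radial_deriv u x = norm x powr (-a-1) * (G' (ln (norm x) / L) / L - a * G (ln (norm x) / L))"
    if x: "x \<noteq> 0" for x
  proof -
    define k' where "k' = norm x powr (-a-1) * (G' (ln (norm x) / L) / L - a * G (ln (norm x) / L))"
    have kd: "((\<lambda>r. r powr (-a) * G (ln r / L)) has_real_derivative k') (at (norm x))"
      unfolding k'_def using kderiv[of "norm x" L a] x L0 by simp
    have "((\<lambda>y. norm y powr (-a) * G (ln (norm y) / L)) has_derivative (\<lambda>h. k' * (h \<bullet> sgn x))) (at x)"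
      using has_derivative_compose[OF has_derivative_norm[OF x] kd[unfolded has_field_derivative_def]] by simp
    moreover have "(\<lambda>y. norm y powr (-a) * G (ln (norm y) / L)) = u" using uG by (auto simp: fun_eq_iff)
    ultimately have hd: "(u has_derivative (\<lambda>h. k' * (h \<bullet> sgn x))) (at x)" by simp
    have fd: "frechet_derivative u (at x) = (\<lambda>h. k' * (h \<bullet> sgn x))"
      using frechet_derivative_at[OF hd] by simp
    have n1: "(x /\<^sub>R norm x) \<bullet> sgn x = 1" using x
      by (simp add: sgn_div_norm dot_square_norm power2_eq_square)
    show ?thesis unfolding radial_deriv_def fd n1 k'_def by simp
  qed
  have D0: "radial_deriv u x = 0" if "x \<noteq> 0" "\<not> (-2 < ln (norm x) / L \<and> ln (norm x) / L < -1)" for x :: 'a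
    using Dform[OF that(1)] G_zero[OF that(2)] G'_zero[OF that(2)] by simp
  have outS: "\<not> (-2 < ln (norm x) / L \<and> ln (norm x) / L < -1)" if "x \<noteq> 0" "norm x < exp (-2*L) \<or> norm x > exp (-L)" for x :: 'a
    using lnb[of x] that by auto
  have cln: "continuous_on (-{0}) (\<lambda>x::'a. ln (norm x) / L)" using L0 by (intro continuous_intros) auto
  have cG0: "continuous_on (-{0}) (\<lambda>x::'a. G (ln (norm x) / L))"
    by (rule continuous_on_compose2[OF G_cont[of UNIV] cln]) auto
  have cG'0: "continuous_on (-{0}) (\<lambda>x::'a. G' (ln (norm x) / L))"
    by (rule continuous_on_compose2[OF G'_cont[of UNIV] cln]) auto
  have cD: "continuous_on (-{0}) (radial_deriv u)"
  proof (rule continuous_on_eq[of _ "\<lambda>x. norm x powr (-a-1) * (G' (ln (norm x) / L) / L - a * G (ln (norm x) / L))"])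
    show "continuous_on (- {0}) (\<lambda>x::'a. norm x powr (- a - 1) * (G' (ln (norm x) / L) / L - a * G (ln (norm x) / L)))"
      using L0 by (intro continuous_intros cG0 cG'0) auto
  qed (use Dform in auto)
  have N2: "DIM('a) \<ge> 2" using N3 by simp
  have g1z: "(radial_deriv u x)\<^sup>2 * vol_density m x = 0" if "norm x < exp (-2*L) \<or> norm x > exp (-L)" for x :: 'a
  proof (cases "x = 0")
    case True then show ?thesis using vd0[OF N2] by simp
  next
    case False then show ?thesis using D0[OF False outS[OF False that]] by simp
  qed
  have ig1: "integrable lborel (\<lambda>x. (radial_deriv u x)\<^sup>2 * vol_density m x)"
    by (rule integrable_cs[OF glue_cont[OF exp_gt_zero[of "-2*L"]], of _ "exp (-L)"])
       (use g1z in \<open>auto intro!: continuous_intros cD vd_cont\<close>)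
  have Tnn: "T d x \<ge> 0" for d x unfolding T_def by simp
  have T0: "T d 0 = 0" for d unfolding T_def using N2 by simp
  have Kpos: "K > 0" unfolding K_def by simp
  have pb: "(radial_deriv u x)\<^sup>2 * vol_density m x \<le> K*(1+e)*a\<^sup>2 * T 0 x + K*(1+1/e)*C/L\<^sup>2 * (T (1/3) x + T 0 x + T (-1/3) x)" for x
  proof -
    have rhs_nn: "0 \<le> K*(1+e)*a\<^sup>2 * T 0 x + K*(1+1/e)*C/L\<^sup>2 * (T (1/3) x + T 0 x + T (-1/3) x)"
      using Kpos e C Tnn by (intro add_nonneg_nonneg mult_nonneg_nonneg divide_nonneg_nonneg) auto
    show ?thesis
    proof (cases "x = 0")
      case True then show ?thesis using vd0[OF N2] rhs_nn by simp
    next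
      case x: False
      show ?thesis
      proof (cases "-2 < ln (norm x) / L \<and> ln (norm x) / L < -1")
        case False then show ?thesis using D0[OF x False] rhs_nn by simp
      next
        case inS: True
        define r where "r = norm x"
        define s where "s = ln r / L"
        have r: "r > 0" using x r_def by simp
        define w where "w = 1 / r ^ DIM('a)"
        have w: "w \<ge> 0" unfolding w_def using r by simp
        define Q where "Q = G' s / L - a * G s"
        have Dsq: "(radial_deriv u x)\<^sup>2 = w * Q\<^sup>2"
          using Dform[OF x] powr_facts(1)[OF r, of a "DIM('a)"]
          unfolding w_def Q_def s_def r_def by (simp add: power_mult_distrib a_def)
        have rl: "r < exp (-L)" using lnb[OF x] inS r_def by auto
        have vdK: "vol_density m x \<le> K"
        proof -
          have r1: "r \<le> 1" using rl L0 by (meson exp_le_one_iff less_eq_real_def neg_le_0_iff_le order.trans)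
          have "r ^ (2*m) \<le> r ^ 1" using r r1 m1 by (intro power_decreasing) auto
          then have "r ^ (2*m) \<le> exp (-L)" using rl by simp
          then have "(real DIM('a) - 1) * r ^ (2*m) \<le> (real DIM('a) - 1) * exp (-L)"
            using N3 by (intro mult_left_mono) auto
          then show ?thesis unfolding K_def using vd_eq[OF x, of m] N3 r_def by simp
        qed
        have y: "Q\<^sup>2 \<le> (1+e) * (a * G s)\<^sup>2 + (1+1/e) * (G' s / L)\<^sup>2"
          unfolding Q_def by (rule young[OF e])
        have c1: "(G' s / L)\<^sup>2 \<le> C * ((G (s + 1/3))\<^sup>2 + (G s)\<^sup>2 + (G (s - 1/3))\<^sup>2) / L\<^sup>2"
          using Cb[of s] L0 by (simp add: power_divide divide_right_mono)
        have "(radial_deriv u x)\<^sup>2 * vol_density m x \<le> w * Q\<^sup>2 * K"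
          unfolding Dsq using vdK w by (intro mult_left_mono) auto
        also have "\<dots> \<le> w * ((1+e) * (a * G s)\<^sup>2 + (1+1/e) * (C * ((G (s + 1/3))\<^sup>2 + (G s)\<^sup>2 + (G (s - 1/3))\<^sup>2) / L\<^sup>2)) * K"
        proof -
          have "Q\<^sup>2 \<le> (1+e) * (a * G s)\<^sup>2 + (1+1/e) * (C * ((G (s + 1/3))\<^sup>2 + (G s)\<^sup>2 + (G (s - 1/3))\<^sup>2) / L\<^sup>2)"
            using y c1 e by (smt (verit, ccfv_SIG) mult_left_mono divide_pos_pos)
          then show ?thesis using w Kpos by (intro mult_right_mono mult_left_mono) auto
        qed
        also have "\<dots> = K*(1+e)*a\<^sup>2 * T 0 x + K*(1+1/e)*C/L\<^sup>2 * (T (1/3) x + T 0 x + T (-1/3) x)"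
          unfolding T_def w_def s_def r_def using x e L0 by (simp add: field_simps power_mult_distrib)
        finally show ?thesis .
      qed
    qed
  qed
  have Tnice: "continuous_on UNIV (T d) \<and> integrable lborel (T d)" if d: "\<bar>d\<bar> \<le> 1/3" for d
  proof -
    have cf: "continuous_on UNIV (\<lambda>s. (G (s / L + d))\<^sup>2)"
      using L0 by (intro continuous_intros continuous_on_compose2[OF G_cont[of UNIV]]) auto
    have zf: "(G (s / L + d))\<^sup>2 = 0" if "s < -3*L \<or> s > 0" for s
    proof -
      have "s / L < -3 \<or> s / L > 0" using that L0 by (auto simp: field_simps)
      then have "\<not> (-2 < s / L + d \<and> s / L + d < -1)" using d by auto
      then show ?thesis using G_zero by simp
    qed
    note rn = radial_nice[OF cf zf, where 'a='a]
    show ?thesis using rn(1) rn(3) unfolding T_def by simp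
  qed
  have TA: "(\<integral>x. T d x \<partial>lborel) = A" for d
  proof -
    have cf: "continuous_on UNIV (\<lambda>s. (G (s / L))\<^sup>2)"
      using L0 by (intro continuous_intros continuous_on_compose2[OF G_cont[of UNIV]]) auto
    have zf: "(G (s / L))\<^sup>2 = 0" if "s < -2*L \<or> s > -L" for s
    proof -
      have "s / L < -2 \<or> s / L > -1" using that L0 by (auto simp: field_simps)
      then show ?thesis using G_zero by auto
    qed
    have e1: "(\<lambda>x::'a. 1 / norm x ^ DIM('a) * (G ((ln (norm x) + L * d) / L))\<^sup>2) = T d"
      unfolding T_def using L0 by (simp add: add_divide_distrib)
    have e2: "(\<lambda>x::'a. 1 / norm x ^ DIM('a) * (G (ln (norm x) / L))\<^sup>2) = T 0"
      unfolding T_def by simp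
    have "(\<integral>x. 1 / norm (x::'a) ^ DIM('a) * (G ((ln (norm x) + L * d) / L))\<^sup>2 \<partial>lborel)
        = (\<integral>x. 1 / norm (x::'a) ^ DIM('a) * (G (ln (norm x) / L))\<^sup>2 \<partial>lborel)"
      by (rule trans_inv[where f="\<lambda>s. (G (s / L))\<^sup>2" and \<alpha>="-2*L" and \<beta>="-L", OF cf zf])
    then show ?thesis unfolding e1 e2 A_def .
  qed
  have iT0: "integrable lborel (T 0)" and iT1: "integrable lborel (T (1/3))" and iT2: "integrable lborel (T (-1/3))"
    using Tnice by auto
  have iR: "integrable lborel (\<lambda>x. K*(1+e)*a\<^sup>2 * T 0 x + K*(1+1/e)*C/L\<^sup>2 * (T (1/3) x + T 0 x + T (-1/3) x))"
    by (intro Bochner_Integration.integrable_add Bochner_Integration.integrable_mult_right iT0 iT1 iT2)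
  have "(\<integral>x. (radial_deriv u x)\<^sup>2 * vol_density m x \<partial>lborel)
      \<le> (\<integral>x. K*(1+e)*a\<^sup>2 * T 0 x + K*(1+1/e)*C/L\<^sup>2 * (T (1/3) x + T 0 x + T (-1/3) x) \<partial>lborel)"
    by (rule integral_mono[OF ig1 iR pb])
  also have "\<dots> = K*(1+e)*a\<^sup>2 * A + K*(1+1/e)*C/L\<^sup>2 * (A + A + A)"
    using iT0 iT1 iT2 TA[of 0] TA[of "1/3"] TA[of "-1/3"]
    by (simp add: Bochner_Integration.integral_add Bochner_Integration.integral_mult_right)
  also have "\<dots> = K * ((1+e)*a\<^sup>2 + 3*(1+1/e)*C/L\<^sup>2) * A" by (simp add: algebra_simps)
  finally have lhs: "model_integral m (\<lambda>x. (radial_deriv u x)\<^sup>2) \<le> K * ((1+e)*a\<^sup>2 + 3*(1+1/e)*C/L\<^sup>2) * A"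
    unfolding model_integral_def .
  have Apos: "A > 0"
  proof -
    define b0 :: 'a where "b0 = (SOME b. b \<in> Basis)"
    have b0: "b0 \<in> Basis" unfolding b0_def by (rule someI_ex) (use nonempty_Basis in blast)
    define x0 where "x0 = exp (-3*L/2) *\<^sub>R b0"
    have nx0: "norm x0 = exp (-3*L/2)" unfolding x0_def using b0 by simp
    have "G (ln (norm x0) / L + 0) > 0" unfolding nx0 using L0 by (intro G_pos) auto
    then have "T 0 x0 > 0" unfolding T_def nx0 by simp
    then show ?thesis unfolding A_def
      using integral_pos_cont[of "T 0" x0] Tnice[of 0] Tnn by auto
  qed
  have vdnn: "vol_density m x \<ge> 0" for x :: 'a
    by (cases "x = 0") (use vd0[OF N2] vd_ge1[of x m] in auto)
  have u0: "u x = 0" if "norm x < exp (-2*L) \<or> norm x > exp (-L)" for x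
    using that supp[of x] by (cases "u x = 0") auto
  have ig2: "integrable lborel (\<lambda>x. (u x)\<^sup>2 / (norm x)\<^sup>2 * vol_density m x)"
    by (rule integrable_cs[OF glue_cont[OF exp_gt_zero[of "-2*L"]], of _ "exp (-L)"])
       (use u0 in \<open>auto intro!: continuous_intros cu vd_cont\<close>)
  have pt2: "T 0 x \<le> (u x)\<^sup>2 / (norm x)\<^sup>2 * vol_density m x" for x
  proof (cases "x = 0")
    case True then show ?thesis using T0 by simp
  next
    case False
    have r: "norm x > 0" using False by simp
    have pf: "(norm x powr (-a))\<^sup>2 / (norm x)\<^sup>2 = 1 / norm x ^ DIM('a)"
      using powr_facts(2)[OF r, of a "DIM('a)"] a_def by simp
    have "(u x)\<^sup>2 / (norm x)\<^sup>2 = ((norm x powr (-a))\<^sup>2 / (norm x)\<^sup>2) * (G (ln (norm x) / L))\<^sup>2"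
      unfolding uG using r by (simp add: power_mult_distrib field_simps)
    also have "\<dots> = T 0 x" unfolding pf T_def by simp
    finally have "(u x)\<^sup>2 / (norm x)\<^sup>2 = T 0 x" .
    then show ?thesis using vd_ge1[OF False, of m] Tnn[of 0 x]
      by (simp add: mult_le_cancel_left1)
  qed
  have M2: "A \<le> model_integral m (\<lambda>x. (u x)\<^sup>2 / (norm x)\<^sup>2)"
    unfolding A_def model_integral_def by (rule integral_mono[OF iT0 ig2 pt2])
  have rhs: "hardy_rhs m c u \<ge> c * A" if c: "c \<ge> 0" for c
  proof -
    have M3: "model_integral m (\<lambda>x. norm x ^ (4*m - 2) * (u x)\<^sup>2) \<ge> 0"
      unfolding model_integral_def by (rule Bochner_Integration.integral_nonneg) (use vdnn in simp)
    have M4: "model_integral m (\<lambda>x. norm x ^ (2*m - 2) * (u x)\<^sup>2) \<ge> 0"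
      unfolding model_integral_def by (rule Bochner_Integration.integral_nonneg) (use vdnn in simp)
    have c3: "(real m)\<^sup>2 * (real DIM('a) - 1)\<^sup>2 \<ge> 0" by simp
    have c4: "real m * (real DIM('a) - 1) * (real DIM('a) - 2 + 2 * real m) \<ge> 0" using N3 by simp
    have "c * A \<le> c * model_integral m (\<lambda>x. (u x)\<^sup>2 / (norm x)\<^sup>2)" using M2 c by (rule mult_left_mono)
    also have "\<dots> \<le> hardy_rhs m c u" unfolding hardy_rhs_def
      using mult_nonneg_nonneg[OF c3 M3] mult_nonneg_nonneg[OF c4 M4] by linarith
    finally show ?thesis .
  qed
  show ?thesis using tu Apos lhs rhs by blast
qed

lemma lim_aux:
  fixes b X M :: real
  shows "((\<lambda>L. exp (M * exp (-L)) * (b + X / L\<^sup>2)) \<longlongrightarrow> b) at_top"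
  by real_asymp

lemma part2:
  fixes m :: nat
  assumes N3: "DIM('a::euclidean_space) \<ge> 3" and m1: "m \<ge> 1"
    and c: "c > (real DIM('a) - 2)\<^sup>2 / 4"
  shows "\<exists>u::'a \<Rightarrow> real. test_fn u \<and> model_integral m (\<lambda>x. (radial_deriv u x)\<^sup>2) < hardy_rhs m c u"
proof -
  define a where "a = (real DIM('a) - 2) / 2"
  have a2: "a\<^sup>2 = (real DIM('a) - 2)\<^sup>2 / 4" unfolding a_def by (simp add: power_divide)
  have ca: "c > a\<^sup>2" using c a2 by simp
  have c0: "c > 0" using ca by (smt (verit) zero_le_power2)
  obtain C where C: "C \<ge> 0" and Cb: "\<And>t. (G' t)\<^sup>2 \<le> C * ((G (t + 1/3))\<^sup>2 + (G t)\<^sup>2 + (G (t - 1/3))\<^sup>2)"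
    using G'_bound by blast
  define e where "e = (c - a\<^sup>2) / (2 * a\<^sup>2 + 1)"
  have d0: "2 * a\<^sup>2 + 1 > 0" by (simp add: add_nonneg_pos)
  have e: "e > 0" unfolding e_def using ca d0 by (intro divide_pos_pos) auto
  define b where "b = (1 + e) * a\<^sup>2"
  have bc: "b < c"
  proof -
    have "e * a\<^sup>2 < c - a\<^sup>2"
    proof -
      have "e * a\<^sup>2 = (c - a\<^sup>2) * (a\<^sup>2 / (2 * a\<^sup>2 + 1))" unfolding e_def by (simp add: field_simps)
      also have "\<dots> < (c - a\<^sup>2) * 1"
        using ca d0 by (intro mult_strict_left_mono) (auto simp: field_simps)
      finally show ?thesis by simp
    qed
    then show ?thesis unfolding b_def by (simp add: algebra_simps)
  qed
  define X where "X = 3 * (1 + 1/e) * C"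
  define M where "M = real DIM('a) - 1"
  have lim: "((\<lambda>L. exp (M * exp (-L)) * (b + X / L\<^sup>2)) \<longlongrightarrow> b) at_top" by (rule lim_aux)
  have ev: "eventually (\<lambda>L. exp (M * exp (-L)) * (b + X / L\<^sup>2) < c \<and> L \<ge> 1) at_top"
    using order_tendstoD(2)[OF lim bc] eventually_ge_at_top[of "1::real"] by (rule eventually_conj)
  then obtain N0 where N0: "\<And>L. L \<ge> N0 \<Longrightarrow> exp (M * exp (-L)) * (b + X / L\<^sup>2) < c \<and> L \<ge> 1"
    unfolding eventually_at_top_linorder by blast
  obtain L where L: "exp (M * exp (-L)) * (b + X / L\<^sup>2) < c" "L \<ge> 1"
    using N0[of N0] by blast
  define u where "u = (\<lambda>x::'a. norm x powr (-a) * (En 0 (2 + (1/L) * ln (norm x)) * En 0 (-1 + (-(1/L)) * ln (norm x))))"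
  define T where "T = (\<lambda>d (x::'a). (1 / norm x ^ DIM('a)) * (G (ln (norm x) / L + d))\<^sup>2)"
  define A where "A = (\<integral>x. T 0 x \<partial>lborel)"
  define K where "K = exp ((real DIM('a) - 1) * exp (-L))"
  have F: "test_fn u \<and> A > 0 \<and> model_integral m (\<lambda>x. (radial_deriv u x)\<^sup>2) \<le> K * ((1+e)*a\<^sup>2 + 3*(1+1/e)*C/L\<^sup>2) * A
         \<and> (\<forall>c\<ge>0. hardy_rhs m c u \<ge> c * A)"
    unfolding u_def A_def T_def K_def a_def
    by (rule family[OF N3 m1 L(2) e C Cb])
  have KL: "K * ((1+e)*a\<^sup>2 + 3*(1+1/e)*C/L\<^sup>2) = exp (M * exp (-L)) * (b + X / L\<^sup>2)"
    unfolding K_def M_def b_def X_def by simp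
  have "model_integral m (\<lambda>x. (radial_deriv u x)\<^sup>2) \<le> exp (M * exp (-L)) * (b + X / L\<^sup>2) * A"
    using F KL by simp
  also have "\<dots> < c * A" using L(1) F by (intro mult_strict_right_mono) auto
  also have "\<dots> \<le> hardy_rhs m c u" using F c0 by auto
  finally show ?thesis using F by blast
qed

theorem corollary3p3:
  fixes m :: nat
  assumes "DIM('a::euclidean_space) \<ge> 3" and "m \<ge> 1"
  shows "(\<forall>u::'a \<Rightarrow> real. test_fn u \<longrightarrow>
            model_integral m (\<lambda>x. (radial_deriv u x)\<^sup>2)
              \<ge> hardy_rhs m ((real DIM('a) - 2)\<^sup>2 / 4) u)
       \<and> (\<forall>c > (real DIM('a) - 2)\<^sup>2 / 4. \<exists>u::'a \<Rightarrow> real. test_fn u \<and>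
            model_integral m (\<lambda>x. (radial_deriv u x)\<^sup>2) < hardy_rhs m c u)"
proof (intro conjI allI impI)
  fix u :: "'a \<Rightarrow> real"
  assume "test_fn u"
  then show "model_integral m (\<lambda>x. (radial_deriv u x)\<^sup>2) \<ge> hardy_rhs m ((real DIM('a) - 2)\<^sup>2 / 4) u"
    by (rule part1[OF assms])
next
  fix c :: real
  assume "c > (real DIM('a) - 2)\<^sup>2 / 4"
  then show "\<exists>u::'a \<Rightarrow> real. test_fn u \<and> model_integral m (\<lambda>x. (radial_deriv u x)\<^sup>2) < hardy_rhs m c u"
    by (rule part2[OF assms])
qed

end
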